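(* Let $n\ge 1$, and let $b,\lambda\in\mathbb{C}$ with $|b|=1$ and $|\lambda|=1$. Define the $n\times n$ matrix $B=[b_{i,j}]_{1\le i,j\le n}$ by $b_{i,j}=0$ if $j<i$; $b_{i,j}=(-1)^{j+1}\binom{j-2}{i-2}\dfrac{b}{\lambda^{i+j-2}}$ if $j\ge i$ and $i>1$; $b_{1,1}=b$; and $b_{1,j}=0$ for $2\le j\le n$. Then $B\overline{B}=I$.
   Context: $\overline{B}$ denotes the entrywise complex conjugate of $B$. *)

theory Defs
  imports Complex_Main "Jordan_Normal_Form.Matrix"
begin

definition B_entry :: "complex \<Rightarrow> complex \<Rightarrow> nat \<Rightarrow> nat \<Rightarrow> complex" where
  "B_entry b lam i j =
     (if j < i then 0
      else if i > 1 then (-1) ^ (j + 1) * of_nat ((j - 2) choose (i - 2)) * b / lam ^ (i + j - 2)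
      else if j = 1 then b
      else 0)"

text \<open>The n x n matrix B (Jordan_Normal_Form matrices are 0-indexed, hence the shift).\<close>
definition B_mat :: "nat \<Rightarrow> complex \<Rightarrow> complex \<Rightarrow> complex mat" where
  "B_mat n b lam = mat n n (\<lambda>(i, j). B_entry b lam (i + 1) (j + 1))"

definition conj_mat :: "complex mat \<Rightarrow> complex mat" where
  "conj_mat A = map_mat cnj A"

end

theory Submission
  imports Defs
begin
lemma alt0: "(\<Sum>d\<le>m. (-1)^(d+m) * of_nat (m choose d) :: complex) = (if m = 0 then 1 else 0)"
proof (cases "m = 0")
  case False
  have "(\<Sum>d\<le>m. (-1)^(d+m) * of_nat (m choose d) :: complex) = (-1)^m * (\<Sum>d\<le>m. (-1)^d * of_nat (m choose d))"
    by (simp add: sum_distrib_left power_add mult_ac)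
  also have "\<dots> = 0" using False choose_alternating_sum[of m] by simp
  finally show ?thesis using False by simp
qed simp

lemma comb: assumes "a \<le> c"
  shows "(\<Sum>j=a..c. (-1)^(j+c) * of_nat (j choose a) * of_nat (c choose j) :: complex) = (if a = c then 1 else 0)"
proof -
  have "(\<Sum>j=a..c. (-1)^(j+c) * of_nat (j choose a) * of_nat (c choose j) :: complex)
      = (\<Sum>j=a..c. of_nat (c choose a) * ((-1)^(j+c) * of_nat ((c-a) choose (j-a))))"
  proof (rule sum.cong[OF refl])
    fix j assume "j \<in> {a..c}"
    hence "(c choose j) * (j choose a) = (c choose a) * ((c-a) choose (j-a))" using choose_mult by auto
    hence "(of_nat (c choose j) * of_nat (j choose a) :: complex) = of_nat (c choose a) * of_nat ((c-a) choose (j-a))"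
      by (metis of_nat_mult)
    thus "(-1)^(j+c) * of_nat (j choose a) * of_nat (c choose j) = (of_nat (c choose a) :: complex) * ((-1)^(j+c) * of_nat ((c-a) choose (j-a)))"
      by (simp add: algebra_simps)
  qed
  also have "\<dots> = of_nat (c choose a) * (\<Sum>j=a..c. (-1)^(j+c) * of_nat ((c-a) choose (j-a)))"
    by (simp add: sum_distrib_left)
  also have "(\<Sum>j=a..c. (-1)^(j+c) * of_nat ((c-a) choose (j-a)) :: complex) = (\<Sum>d\<le>c-a. (-1)^(d+(c-a)) * of_nat ((c-a) choose d))"
  proof -
    have "(\<Sum>j=a..c. (-1)^(j+c) * of_nat ((c-a) choose (j-a)) :: complex) = (\<Sum>d\<in>{0..c-a}. (-1)^((d+a)+c) * of_nat ((c-a) choose (d+a-a)))"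
      by (rule sum.reindex_bij_witness[where j="\<lambda>j. j - a" and i="\<lambda>d. d + a"]) (use assms in auto)
    also have "\<dots> = (\<Sum>d\<le>c-a. (-1)^(d+(c-a)) * of_nat ((c-a) choose d))"
    proof (rule sum.cong)
      fix d assume "d \<in> {..c-a}"
      have "d + a + c = (d + (c-a)) + 2*a" using assms by simp
      hence "(-1::complex)^(d+a+c) = (-1)^(d+(c-a)) * ((-1)^2)^a" by (metis power_add power_mult)
      hence "(-1::complex)^(d+a+c) = (-1)^(d+(c-a))" by simp
      thus "(-1::complex)^(d+a+c) * of_nat ((c-a) choose (d+a-a)) = (-1)^(d+(c-a)) * of_nat ((c-a) choose d)" by simp
    qed (auto simp: atLeast0AtMost)
    finally show ?thesis .
  qed
  also have "\<dots> = (if c - a = 0 then 1 else 0)" by (rule alt0)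
  finally show ?thesis using assms by auto
qed

lemma entry:
  fixes b lam :: complex
  assumes i: "i < n" and k: "k < n" and hb: "cmod b = 1" and hl: "cmod lam = 1"
  shows "(\<Sum>j<n. B_entry b lam (Suc i) (Suc j) * cnj (B_entry b lam (Suc j) (Suc k))) = (if i = k then 1 else 0)"
proof -
  define f where "f i j = B_entry b lam (Suc i) (Suc j)" for i j
  have bb: "b * cnj b = 1"
  proof -
    have "b * cnj b = of_real ((cmod b)^2)" by (rule complex_norm_square[symmetric])
    thus ?thesis using hb by simp
  qed
  have l0: "lam \<noteq> 0" using hl by auto
  have ll: "lam * cnj lam = 1"
  proof -
    have "lam * cnj lam = of_real ((cmod lam)^2)" by (rule complex_norm_square[symmetric])
    thus ?thesis using hl by simp
  qed
  have cl: "cnj lam = inverse lam" using inverse_unique[OF ll] by simp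
  have f0: "f 0 j = (if j = 0 then b else 0)" for j unfolding f_def B_entry_def by auto
  have fz: "f (Suc a) 0 = 0" for a unfolding f_def B_entry_def by auto
  have fcol: "f j 0 = (if j = 0 then b else 0)" for j unfolding f_def B_entry_def by auto
  have fs: "f (Suc a) (Suc j) = (if j < a then 0 else (-1)^(j+3) * of_nat (j choose a) * b / lam^(a+j+2))" for a j
    unfolding f_def B_entry_def by (simp add: eval_nat_numeral)
  show ?thesis
  proof (cases i)
    case 0
    have "(\<Sum>j<n. f i j * cnj (f j k)) = (\<Sum>j<n. if j = 0 then b * cnj (f 0 k) else 0)"
      using 0 by (intro sum.cong) (auto simp: f0)
    also have "\<dots> = b * cnj (f 0 k)" using i by simp
    also have "\<dots> = (if i = k then 1 else 0)" using 0 bb by (simp add: f0)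
    finally show ?thesis unfolding f_def .
  next
    case (Suc a)
    note ia = Suc
    show ?thesis
    proof (cases k)
      case 0
      have "(\<Sum>j<n. f i j * cnj (f j k)) = 0"
        using 0 ia by (intro sum.neutral) (auto simp: fcol fz)
      thus ?thesis unfolding f_def using 0 ia by simp
    next
      case (Suc c)
      note kc = Suc
      show ?thesis
      proof (cases "a \<le> c")
        case False
        have "(\<Sum>j<n. f i j * cnj (f j k)) = 0"
        proof (intro sum.neutral ballI)
          fix j assume "j \<in> {..<n}"
          show "f i j * cnj (f j k) = 0"
          proof (cases j)
            case 0 thus ?thesis using ia by (simp add: fz)
          next
            case (Suc j') thus ?thesis using ia kc False by (auto simp: fs)
          qed
        qed
        thus ?thesis unfolding f_def using ia kc False by simp
      next
        case True
        have "(\<Sum>j<n. f i j * cnj (f j k)) = (\<Sum>j\<in>{Suc a..Suc c}. f i j * cnj (f j k))"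
        proof (rule sum.mono_neutral_right)
          show "{Suc a..Suc c} \<subseteq> {..<n}" using k kc by auto
          show "\<forall>j\<in>{..<n} - {Suc a..Suc c}. f i j * cnj (f j k) = 0"
          proof
            fix j assume "j \<in> {..<n} - {Suc a..Suc c}"
            thus "f i j * cnj (f j k) = 0"
              using ia kc by (cases j) (auto simp: fz fs)
          qed
        qed simp
        also have "\<dots> = (\<Sum>j=a..c. f i (Suc j) * cnj (f (Suc j) k))"
          by (rule sum.shift_bounds_cl_Suc_ivl)
        also have "\<dots> = (\<Sum>j=a..c. lam^(c-a) * ((-1)^(j+c) * of_nat (j choose a) * of_nat (c choose j)))"
        proof (rule sum.cong[OF refl])
          fix j assume j: "j \<in> {a..c}"
          have e: "lam^(a+j+2) * lam^(c-a) = lam^(j+c+2)" 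
          proof -
            have "a+j+2+(c-a) = j+c+2" using j by auto
            thus ?thesis by (metis power_add)
          qed
          have s: "(-1::complex)^(j+3) * (-1)^(c+3) = (-1)^(j+c)"
          proof -
            have "(-1::complex)^(j+3) * (-1)^(c+3) = (-1)^(j+c) * ((-1)^2)^3" by (simp only: power_add power_mult[symmetric]) (simp add: algebra_simps)
            thus ?thesis by simp
          qed
          have "f i (Suc j) * cnj (f (Suc j) k) =
             ((-1)^(j+3) * (-1)^(c+3)) * of_nat (j choose a) * of_nat (c choose j) * (b * cnj b) * (lam^(j+c+2) / lam^(a+j+2))"
            using j ia kc by (simp add: fs cl l0 field_simps)
          also have "\<dots> = lam^(c-a) * ((-1)^(j+c) * of_nat (j choose a) * of_nat (c choose j))"
            unfolding s bb e[symmetric] using l0 by simp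
          finally show "f i (Suc j) * cnj (f (Suc j) k) = lam^(c-a) * ((-1)^(j+c) * of_nat (j choose a) * of_nat (c choose j))" .
        qed
        also have "\<dots> = lam^(c-a) * (if a = c then 1 else 0)"
          by (simp add: sum_distrib_left[symmetric] comb[OF True])
        also have "\<dots> = (if i = k then 1 else 0)" using ia kc by simp
        finally show ?thesis unfolding f_def .
      qed
    qed
  qed
qed

theorem lemma3p5:
  fixes n :: nat and b lam :: complex
  assumes "n \<ge> 1" and "cmod b = 1" and "cmod lam = 1"
  shows "B_mat n b lam * conj_mat (B_mat n b lam) = 1\<^sub>m n"
proof (rule eq_matI)
  fix i k assume "i < dim_row (1\<^sub>m n :: complex mat)" "k < dim_col (1\<^sub>m n :: complex mat)"
  hence i: "i < n" and k: "k < n" by auto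
  have "(B_mat n b lam * conj_mat (B_mat n b lam)) $$ (i, k)
      = (\<Sum>j<n. B_entry b lam (Suc i) (Suc j) * cnj (B_entry b lam (Suc j) (Suc k)))"
    using i k by (simp add: B_mat_def conj_mat_def scalar_prod_def lessThan_atLeast0)
  also have "\<dots> = (1\<^sub>m n :: complex mat) $$ (i, k)"
    using entry[OF i k assms(2,3)] i k by simp
  finally show "(B_mat n b lam * conj_mat (B_mat n b lam)) $$ (i, k) = (1\<^sub>m n :: complex mat) $$ (i, k)" .
qed (auto simp: B_mat_def conj_mat_def)
end
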